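(* Let $L\subset\mathbb{R}$ be a real multiquadratic field of rank $t$, i.e. $L/\mathbb{Q}$ is Galois with $\mathrm{Gal}(L/\mathbb{Q})\cong(\mathbb{Z}/2\mathbb{Z})^t$, and let $\epsilon_1,\dots,\epsilon_{2^t-1}$ be the fundamental units of the $2^t-1$ quadratic subfields of $L$. Then the subspace of $\mathbb{F}_2^{2^t}$ spanned by the signatures (in $L$) of $-1,\epsilon_1,\dots,\epsilon_{2^t-1}$ has dimension at most $t+1$, and this maximum value $t+1$ is attained when every $\epsilon_i$ has norm $-1$.
   Context: For a totally real field $F$ of degree $n$ and $0\neq\alpha\in F$, the signature of $\alpha$ is the vector in $\mathbb{F}_2^n$ whose entry at a real embedding $v$ of $F$ is $0$ if $v(\alpha)>0$ and $1$ if $v(\alpha)<0$. *)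

theory Defs
  imports Complex_Main "HOL-Computational_Algebra.Polynomial" "HOL-Library.Z2"
    "HOL-Library.Function_Algebras" "HOL-Algebra.Elementary_Groups" "HOL-Algebra.Product_Groups"
begin

definition is_subfield :: "real set \<Rightarrow> bool" where
  "is_subfield K \<longleftrightarrow> 0 \<in> K \<and> 1 \<in> K \<and>
     (\<forall>x\<in>K. \<forall>y\<in>K. x + y \<in> K \<and> x * y \<in> K) \<and>
     (\<forall>x\<in>K. - x \<in> K) \<and> (\<forall>x\<in>K. x \<noteq> 0 \<longrightarrow> inverse x \<in> K)"

definition rat_degree :: "real set \<Rightarrow> nat \<Rightarrow> bool" where
  "rat_degree K n \<longleftrightarrow> (\<exists>b :: nat \<Rightarrow> real.
      (\<forall>i<n. b i \<in> K) \<and>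
      (\<forall>c :: nat \<Rightarrow> rat. (\<Sum>i<n. of_rat (c i) * b i) = 0 \<longrightarrow> (\<forall>i<n. c i = 0)) \<and>
      (\<forall>x\<in>K. \<exists>c :: nat \<Rightarrow> rat. x = (\<Sum>i<n. of_rat (c i) * b i)))"

definition embeddings :: "real set \<Rightarrow> (real \<Rightarrow> real) set" where
  "embeddings K = {\<sigma>. \<sigma> 1 = 1 \<and>
      (\<forall>x\<in>K. \<forall>y\<in>K. \<sigma> (x + y) = \<sigma> x + \<sigma> y \<and> \<sigma> (x * y) = \<sigma> x * \<sigma> y) \<and>
      (\<forall>x. x \<notin> K \<longrightarrow> \<sigma> x = 0)}"

definition automorphisms :: "real set \<Rightarrow> (real \<Rightarrow> real) set" where
  "automorphisms K = {\<sigma> \<in> embeddings K. \<sigma> ` K = K}"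

definition galois_group :: "real set \<Rightarrow> (real \<Rightarrow> real) monoid" where
  "galois_group K = \<lparr>carrier = automorphisms K, mult = (\<lambda>\<sigma> \<tau>. \<sigma> \<circ> \<tau>),
                      one = (\<lambda>x. if x \<in> K then x else 0)\<rparr>"

text \<open>L is a real multiquadratic field of rank t: L/Q finite Galois
  (|Aut(L/Q)| = [L:Q]) with Gal(L/Q) isomorphic to (Z/2Z)^t.\<close>
definition real_multiquadratic :: "real set \<Rightarrow> nat \<Rightarrow> bool" where
  "real_multiquadratic L t \<longleftrightarrow> is_subfield L \<and>
     (\<exists>n. rat_degree L n \<and> card (automorphisms L) = n) \<and>
     galois_group L \<cong> product_group {..<t} (\<lambda>_. integer_mod_group 2)"

definition quadratic_subfields :: "real set \<Rightarrow> real set set" where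
  "quadratic_subfields L = {K. is_subfield K \<and> K \<subseteq> L \<and> rat_degree K 2}"

definition is_unit_OK :: "real set \<Rightarrow> real \<Rightarrow> bool" where
  "is_unit_OK K u \<longleftrightarrow> u \<in> K \<and> u \<noteq> 0 \<and> algebraic_int u \<and> algebraic_int (inverse u)"

definition fundamental_unit :: "real set \<Rightarrow> real \<Rightarrow> bool" where
  "fundamental_unit K \<epsilon> \<longleftrightarrow> is_unit_OK K \<epsilon> \<and>
     (\<forall>u. is_unit_OK K u \<longrightarrow> (\<exists>k::int. u = \<epsilon> powi k \<or> u = - (\<epsilon> powi k)))"

definition field_norm :: "real set \<Rightarrow> real \<Rightarrow> real" where
  "field_norm K x = (\<Prod>\<sigma>\<in>embeddings K. \<sigma> x)"

definition signature :: "real set \<Rightarrow> real \<Rightarrow> (real \<Rightarrow> real) \<Rightarrow> bit" where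
  "signature L \<alpha> = (\<lambda>\<sigma>. if \<sigma> \<in> embeddings L \<and> \<sigma> \<alpha> < 0 then 1 else 0)"

end

theory Submission
  imports Defs
begin


lemma vs_fun: "vector_space (\<lambda>(c::'a::field) (f::'b \<Rightarrow> 'a) x. c * f x)"
  by unfold_locales (auto simp: fun_eq_iff algebra_simps)

interpretation RV: vector_space "\<lambda>(c::real) (f::real\<Rightarrow>real) x. c * f x"
  by (rule vs_fun)

interpretation BV: vector_space "\<lambda>(c::bit) (f::(real\<Rightarrow>real)\<Rightarrow>bit) x. c * f x"
  by (rule vs_fun)

lemma bit_add_self[simp]: "(a::bit) + a = 0"
  by (cases a) simp_all

lemma sum_fun_apply: "(\<Sum>i\<in>A. f i) x = (\<Sum>i\<in>A. f i x)"
  by (induction A rule: infinite_finite_induct) auto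


context fixes K assumes sf: "is_subfield K" begin

lemma sf_0[simp]: "0 \<in> K" and sf_1[simp]: "1 \<in> K"
  using sf by (auto simp: is_subfield_def)

lemma sf_add[simp]: "x \<in> K \<Longrightarrow> y \<in> K \<Longrightarrow> x + y \<in> K"
  and sf_mult[simp]: "x \<in> K \<Longrightarrow> y \<in> K \<Longrightarrow> x * y \<in> K"
  and sf_neg[simp]: "x \<in> K \<Longrightarrow> - x \<in> K"
  and sf_inv[simp]: "x \<in> K \<Longrightarrow> inverse x \<in> K"
  using sf by (auto simp: is_subfield_def)

lemma sf_diff[simp]: "x \<in> K \<Longrightarrow> y \<in> K \<Longrightarrow> x - y \<in> K"
  using sf_add[of x "-y"] by simp

lemma sf_of_nat[simp]: "of_nat n \<in> K"
  by (induction n) auto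

lemma sf_of_int[simp]: "of_int k \<in> K"
proof (cases k rule: int_cases)
  case (nonneg n) then show ?thesis using sf_of_nat[of n] by simp
next
  case (neg n) then show ?thesis using sf_neg[OF sf_of_nat[of "Suc n"]] by simp
qed

lemma sf_of_rat[simp]: "of_rat q \<in> K"
proof -
  obtain a b where q: "q = of_int a / of_int b"
  proof (cases q)
    case (Fract a b) then show ?thesis using that by (simp add: Fract_of_int_quotient)
  qed
  have "(of_rat q :: real) = of_int a * inverse (of_int b)"
    by (simp add: q of_rat_divide of_rat_mult of_rat_inverse divide_inverse)
  then show ?thesis by simp
qed

lemma sf_sum[simp]: "(\<And>i. i \<in> A \<Longrightarrow> f i \<in> K) \<Longrightarrow> sum f A \<in> K"
  by (induction A rule: infinite_finite_induct) auto

context fixes \<tau> assumes emb: "\<tau> \<in> embeddings K" begin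

lemma emb_1[simp]: "\<tau> 1 = 1"
  and emb_add[simp]: "x \<in> K \<Longrightarrow> y \<in> K \<Longrightarrow> \<tau> (x + y) = \<tau> x + \<tau> y"
  and emb_mult[simp]: "x \<in> K \<Longrightarrow> y \<in> K \<Longrightarrow> \<tau> (x * y) = \<tau> x * \<tau> y"
  and emb_out: "x \<notin> K \<Longrightarrow> \<tau> x = 0"
  using emb by (auto simp: embeddings_def)

lemma emb_0[simp]: "\<tau> 0 = 0"
  using emb_add[of 0 0] by simp

lemma emb_neg[simp]: "x \<in> K \<Longrightarrow> \<tau> (- x) = - \<tau> x"
  using emb_add[of x "-x"] by (simp add: eq_neg_iff_add_eq_0)

lemma emb_diff[simp]: "x \<in> K \<Longrightarrow> y \<in> K \<Longrightarrow> \<tau> (x - y) = \<tau> x - \<tau> y"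
  using emb_add[of x "-y"] by simp

lemma emb_of_nat[simp]: "\<tau> (of_nat n) = of_nat n"
  by (induction n) (auto simp: add.commute)

lemma emb_of_int[simp]: "\<tau> (of_int k) = of_int k"
proof (cases k rule: int_cases)
  case (nonneg n) then show ?thesis using emb_of_nat[of n] by simp
next
  case (neg n) then show ?thesis using emb_neg[OF sf_of_nat[of "Suc n"]] emb_of_nat[of "Suc n"]
    by simp
qed

lemma emb_of_rat[simp]: "\<tau> (of_rat q) = of_rat q"
proof -
  obtain a b where q: "q = of_int a / of_int b" and b: "b \<noteq> 0"
  proof (cases q)
    case (Fract a b) then show ?thesis using that by (simp add: Fract_of_int_quotient)
  qed
  have "of_int b * (of_rat q :: real) = of_int a"
    using b by (simp add: q of_rat_divide)
  then have "\<tau> (of_int b * of_rat q) = of_int a" by simp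
  then have "of_int b * \<tau> (of_rat q) = of_int a" by simp
  then show ?thesis using b by (simp add: q of_rat_divide field_simps)
qed

lemma emb_rat_mult[simp]: "x \<in> K \<Longrightarrow> \<tau> (of_rat q * x) = of_rat q * \<tau> x"
  by simp

lemma emb_sum: "(\<And>i. i \<in> A \<Longrightarrow> f i \<in> K) \<Longrightarrow> \<tau> (sum f A) = (\<Sum>i\<in>A. \<tau> (f i))"
  by (induction A rule: infinite_finite_induct) auto

end
end


lemma emb_differ:
  assumes "\<sigma> \<in> embeddings K" "\<tau> \<in> embeddings K" "\<sigma> \<noteq> \<tau>"
  obtains z where "z \<in> K" "\<sigma> z \<noteq> \<tau> z"
proof -
  obtain z where z: "\<sigma> z \<noteq> \<tau> z" using assms(3) by (auto simp: fun_eq_iff)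
  have "z \<in> K"
  proof (rule ccontr)
    assume "z \<notin> K"
    then have "\<sigma> z = 0" "\<tau> z = 0" using assms(1,2) unfolding embeddings_def by auto
    then show False using z by simp
  qed
  then show ?thesis using z that by blast
qed

lemma dedekind_aux:
  assumes sf: "is_subfield K"
  shows "finite T \<Longrightarrow> T \<subseteq> embeddings K \<Longrightarrow> (\<forall>\<tau>\<in>T. u \<tau> \<noteq> 0) \<Longrightarrow>
    (\<forall>x\<in>K. (\<Sum>\<tau>\<in>T. u \<tau> * \<tau> x) = 0) \<Longrightarrow> T = {}"
proof (induction "card T" arbitrary: T u rule: less_induct)
  case less
  show ?case
  proof (rule ccontr)
    assume "T \<noteq> {}"
    then obtain \<tau>0 where t0: "\<tau>0 \<in> T" by auto
    have E0: "\<tau>0 \<in> embeddings K" using t0 less by auto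
    show False
    proof (cases "T = {\<tau>0}")
      case True
      have "(\<Sum>\<tau>\<in>T. u \<tau> * \<tau> 1) = 0" using less(5) sf_1[OF sf] by blast
      then have "u \<tau>0 * \<tau>0 1 = 0" using True by simp
      then show False using less(4) t0 emb_1[OF sf E0] by simp
    next
      case False
      then obtain \<tau>1 where t1: "\<tau>1 \<in> T" "\<tau>1 \<noteq> \<tau>0" using t0 by auto
      have E1: "\<tau>1 \<in> embeddings K" using t1 less by auto
      obtain z where z: "z \<in> K" "\<tau>1 z \<noteq> \<tau>0 z" using emb_differ[OF E1 E0 t1(2)] by blast
      define T' where "T' = {\<tau>\<in>T. \<tau> z \<noteq> \<tau>0 z}"
      define u' where "u' \<tau> = u \<tau> * (\<tau> z - \<tau>0 z)" for \<tau>
      have sub: "T' \<subseteq> T - {\<tau>0}" by (auto simp: T'_def)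
      have fin': "finite T'" using less(2) sub finite_subset by blast
      have "card T' < card T"
      proof -
        have "card T' \<le> card (T - {\<tau>0})" using sub less(2) by (intro card_mono) auto
        also have "\<dots> < card T"
        proof -
          have "card T > 0" using t0 less(2) card_gt_0_iff by blast
          then show ?thesis using t0 less(2) by simp
        qed
        finally show ?thesis .
      qed
      moreover have "T' \<subseteq> embeddings K" using sub less(3) by auto
      moreover have "\<forall>\<tau>\<in>T'. u' \<tau> \<noteq> 0" using less(4) by (auto simp: T'_def u'_def)
      moreover have "\<forall>x\<in>K. (\<Sum>\<tau>\<in>T'. u' \<tau> * \<tau> x) = 0"
      proof
        fix x assume x: "x \<in> K"
        have "(\<Sum>\<tau>\<in>T'. u' \<tau> * \<tau> x) = (\<Sum>\<tau>\<in>T. u' \<tau> * \<tau> x)"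
          by (rule sum.mono_neutral_left) (auto simp: less(2) T'_def u'_def)
        also have "\<dots> = (\<Sum>\<tau>\<in>T. u \<tau> * \<tau> (z * x)) - \<tau>0 z * (\<Sum>\<tau>\<in>T. u \<tau> * \<tau> x)"
        proof -
          have "\<And>\<tau>. \<tau> \<in> T \<Longrightarrow> \<tau> (z * x) = \<tau> z * \<tau> x"
            using less(3) emb_mult[OF sf _ z(1) x] by auto
          then have "(\<Sum>\<tau>\<in>T. u' \<tau> * \<tau> x) = (\<Sum>\<tau>\<in>T. u \<tau> * \<tau> (z * x) - \<tau>0 z * (u \<tau> * \<tau> x))"
            by (intro sum.cong) (auto simp: u'_def algebra_simps)
          then show ?thesis by (simp add: sum_distrib_left sum_subtractf)
        qed
        also have "\<dots> = 0" using less(5) x z(1) sf by simp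
        finally show "(\<Sum>\<tau>\<in>T'. u' \<tau> * \<tau> x) = 0" .
      qed
      ultimately have "T' = {}" by (rule less(1)[OF _ fin'])
      moreover have "\<tau>1 \<in> T'" using t1 z by (auto simp: T'_def)
      ultimately show False by simp
    qed
  qed
qed

lemma dedekind:
  assumes sf: "is_subfield K"
  shows "RV.independent (embeddings K)"
  unfolding RV.independent_explicit_finite_subsets
proof (intro allI impI ballI)
  fix S u v
  assume S: "S \<subseteq> embeddings K" "finite S" and eq: "(\<Sum>v\<in>S. (\<lambda>x. u v * v x)) = 0" and v: "v \<in> S"
  define T where "T = {v\<in>S. u v \<noteq> 0}"
  have fT: "finite T" "T \<subseteq> embeddings K" "\<forall>\<tau>\<in>T. u \<tau> \<noteq> 0" using S by (auto simp: T_def)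
  have "\<forall>x\<in>K. (\<Sum>\<tau>\<in>T. u \<tau> * \<tau> x) = 0"
  proof
    fix x
    have "(\<Sum>\<tau>\<in>T. u \<tau> * \<tau> x) = (\<Sum>\<tau>\<in>S. u \<tau> * \<tau> x)"
      by (rule sum.mono_neutral_left) (auto simp: S T_def)
    also have "\<dots> = (\<Sum>v\<in>S. (\<lambda>x. u v * v x)) x" by (simp add: sum_fun_apply)
    also have "\<dots> = 0" by (simp add: eq)
    finally show "(\<Sum>\<tau>\<in>T. u \<tau> * \<tau> x) = 0" .
  qed
  then have "T = {}" by (rule dedekind_aux[OF sf fT])
  then show "u v = 0" using v by (auto simp: T_def)
qed


definition coord :: "(nat \<Rightarrow> real) \<Rightarrow> nat \<Rightarrow> real \<Rightarrow> nat \<Rightarrow> rat" where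
  "coord b n x = (SOME c. x = (\<Sum>i<n. of_rat (c i) * b i))"

definition cfun :: "real set \<Rightarrow> (nat \<Rightarrow> real) \<Rightarrow> nat \<Rightarrow> nat \<Rightarrow> real \<Rightarrow> real" where
  "cfun K b n i x = (if x \<in> K then of_rat (coord b n x i) else 0)"

lemma coord_eq:
  assumes "\<forall>x\<in>K. \<exists>c :: nat \<Rightarrow> rat. x = (\<Sum>i<n. of_rat (c i) * b i)" "x \<in> K"
  shows "x = (\<Sum>i<n. of_rat (coord b n x i) * b i)"
proof -
  from assms obtain c where "x = (\<Sum>i<n. of_rat (c i) * b i)" by blast
  then show ?thesis unfolding coord_def by (rule someI[where P = "\<lambda>c. x = (\<Sum>i<n. of_rat (c i) * b i)"])
qed

lemma emb_span:
  assumes sf: "is_subfield K" and bK: "\<forall>i<n. b i \<in> K"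
    and sp: "\<forall>x\<in>K. \<exists>c :: nat \<Rightarrow> rat. x = (\<Sum>i<n. of_rat (c i) * b i)"
    and emb: "\<tau> \<in> embeddings K"
  shows "\<tau> \<in> RV.span (cfun K b n ` {..<n})"
proof -
  have eq: "\<tau> = (\<Sum>i<n. (\<lambda>x. \<tau> (b i) * cfun K b n i x))"
  proof
    fix x
    show "\<tau> x = (\<Sum>i<n. (\<lambda>x. \<tau> (b i) * cfun K b n i x)) x"
    proof (cases "x \<in> K")
      case True
      have "\<tau> x = \<tau> (\<Sum>i<n. of_rat (coord b n x i) * b i)"
        using coord_eq[OF sp True] by simp
      also have "\<dots> = (\<Sum>i<n. \<tau> (of_rat (coord b n x i) * b i))"
        by (rule emb_sum[OF sf emb]) (use bK sf in auto)
      also have "\<dots> = (\<Sum>i<n. \<tau> (b i) * cfun K b n i x)"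
        using bK True by (intro sum.cong) (auto simp: emb_rat_mult[OF sf emb] cfun_def)
      finally show ?thesis by (simp add: sum_fun_apply)
    next
      case False
      then show ?thesis using emb_out[OF sf emb False] by (simp add: sum_fun_apply cfun_def)
    qed
  qed
  have "(\<Sum>i<n. (\<lambda>x. \<tau> (b i) * cfun K b n i x)) \<in> RV.span (cfun K b n ` {..<n})"
    by (intro RV.span_sum RV.span_scale RV.span_base) auto
  then show ?thesis using eq by simp
qed

lemma emb_card:
  assumes sf: "is_subfield K" and deg: "rat_degree K n"
  shows "finite (embeddings K) \<and> card (embeddings K) \<le> n"
proof -
  obtain b where bK: "\<forall>i<n. b i \<in> K"
    and sp: "\<forall>x\<in>K. \<exists>c :: nat \<Rightarrow> rat. x = (\<Sum>i<n. of_rat (c i) * b i)"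
    using deg unfolding rat_degree_def by blast
  have "finite (embeddings K) \<and> card (embeddings K) \<le> card (cfun K b n ` {..<n})"
    by (rule RV.independent_span_bound) (use dedekind[OF sf] emb_span[OF sf bK sp] in auto)
  moreover have "card (cfun K b n ` {..<n}) \<le> n"
    using card_image_le[of "{..<n}" "cfun K b n"] by simp
  ultimately show ?thesis by linarith
qed

lemma rat_degree_pos:
  assumes sf: "is_subfield K" and deg: "rat_degree K n"
  shows "n > 0"
proof (rule ccontr)
  assume "\<not> n > 0"
  then have "n = 0" by simp
  then show False using deg sf_1[OF sf] unfolding rat_degree_def by auto
qed

lemma aut_sub_emb: "automorphisms K \<subseteq> embeddings K"
  by (auto simp: automorphisms_def)

lemma fixed_rat:
  assumes sf: "is_subfield L" and deg: "rat_degree L n" and cardG: "card (automorphisms L) = n"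
    and z: "z \<in> L" and fixz: "\<forall>g\<in>automorphisms L. g z = z"
  shows "z \<in> \<rat>"
proof -
  obtain b where bK: "\<forall>i<n. b i \<in> L"
    and sp: "\<forall>x\<in>L. \<exists>c :: nat \<Rightarrow> rat. x = (\<Sum>i<n. of_rat (c i) * b i)"
    using deg unfolding rat_degree_def by blast
  define G where "G = automorphisms L"
  define B where "B = cfun L b n ` {..<n}"
  have npos: "n > 0" by (rule rat_degree_pos[OF sf deg])
  have finG: "finite G" using cardG npos G_def card_ge_0_finite by blast
  have indG: "RV.independent G"
    using RV.independent_mono[OF dedekind[OF sf] aut_sub_emb] G_def by simp
  have GB: "G \<subseteq> RV.span B"
    using emb_span[OF sf bK sp] aut_sub_emb G_def B_def by blast
  have cardB: "card B \<le> n" using card_image_le[of "{..<n}" "cfun L b n"] B_def by simp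
  have inG: "cfun L b n i \<in> RV.span G" if i: "i < n" for i
  proof (rule ccontr)
    assume nin: "cfun L b n i \<notin> RV.span G"
    then have "cfun L b n i \<notin> G" using RV.span_base by blast
    then have c1: "card (insert (cfun L b n i) G) = n + 1" using finG cardG G_def by simp
    have "RV.independent (insert (cfun L b n i) G)" by (rule RV.independent_insertI[OF nin indG])
    moreover have "insert (cfun L b n i) G \<subseteq> RV.span B"
      using GB i B_def RV.span_base by auto
    ultimately have "card (insert (cfun L b n i) G) \<le> card B"
      using RV.independent_span_bound[of B] B_def by auto
    then show False using c1 cardB by simp
  qed
  define P where "P f \<longleftrightarrow> (\<forall>x\<in>L. f (z * x) = z * f x)" for f :: "real \<Rightarrow> real"
  have subP: "RV.subspace (Collect P)"
    unfolding RV.subspace_def P_def by (auto simp: algebra_simps)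
  have PG: "P g" if "g \<in> G" for g
  proof -
    have emb: "g \<in> embeddings L" using that G_def aut_sub_emb by blast
    have gz: "g z = z" using fixz that G_def by blast
    show ?thesis unfolding P_def using emb_mult[OF sf emb z] gz by simp
  qed
  have Pc: "P (cfun L b n i)" if "i < n" for i
    using RV.span_induct[OF inG[OF that] subP] PG by auto
  have one: "(1::real) = (\<Sum>i<n. of_rat (coord b n 1 i) * b i)"
    using coord_eq[OF sp sf_1[OF sf]] .
  obtain i where i: "i < n" "coord b n 1 i \<noteq> 0"
  proof (rule ccontr)
    assume "\<not> thesis"
    then have "\<forall>i<n. coord b n 1 i = 0" using that by blast
    then have "(\<Sum>i<n. of_rat (coord b n 1 i) * b i) = (0::real)" by simp
    then show False using one by simp
  qed
  have "cfun L b n i (z * 1) = z * cfun L b n i 1"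
    using Pc[OF i(1)] sf_1[OF sf] unfolding P_def by blast
  then have "of_rat (coord b n z i) = z * of_rat (coord b n 1 i)"
    using z sf_1[OF sf] by (simp add: cfun_def)
  then have "z = of_rat (coord b n z i / coord b n 1 i)"
    using i(2) by (simp add: of_rat_divide field_simps)
  then show ?thesis by (metis Rats_of_rat)
qed

lemma emb_eq_aut:
  assumes sf: "is_subfield L" and deg: "rat_degree L n" and cardG: "card (automorphisms L) = n"
  shows "embeddings L = automorphisms L" "finite (automorphisms L)"
proof -
  have "finite (embeddings L) \<and> card (embeddings L) \<le> n" by (rule emb_card[OF sf deg])
  then show "embeddings L = automorphisms L"
    using card_subset_eq[OF _ aut_sub_emb, of L] cardG
    by (metis antisym card_mono aut_sub_emb)
  then show "finite (automorphisms L)" using emb_card[OF sf deg] by simp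
qed


locale mq =
  fixes L :: "real set" and n t :: nat and \<phi> :: "(real \<Rightarrow> real) \<Rightarrow> nat \<Rightarrow> int"
  assumes sf: "is_subfield L" and deg: "rat_degree L n" and cardG: "card (automorphisms L) = n"
    and iso: "\<phi> \<in> iso (galois_group L) (product_group {..<t} (\<lambda>_. integer_mod_group 2))"
begin

abbreviation "G \<equiv> automorphisms L"
definition idL :: "real \<Rightarrow> real" where "idL = (\<lambda>x. if x \<in> L then x else 0)"

lemma E_eq: "embeddings L = G" and finG: "finite G"
  using emb_eq_aut[OF sf deg cardG] by auto

lemma G_emb: "\<sigma> \<in> G \<Longrightarrow> \<sigma> \<in> embeddings L"
  using aut_sub_emb by blast

lemma G_L: "\<sigma> \<in> G \<Longrightarrow> x \<in> L \<Longrightarrow> \<sigma> x \<in> L"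
  by (auto simp: automorphisms_def)

lemma G_out: "\<sigma> \<in> G \<Longrightarrow> x \<notin> L \<Longrightarrow> \<sigma> x = 0"
  by (auto simp: automorphisms_def embeddings_def)

lemma G_0[simp]: "\<sigma> \<in> G \<Longrightarrow> \<sigma> 0 = 0"
  using emb_0[OF sf G_emb] .

lemma comp_G: assumes "\<sigma> \<in> G" "\<tau> \<in> G" shows "\<sigma> \<circ> \<tau> \<in> G"
proof -
  have e: "\<sigma> \<in> embeddings L" "\<tau> \<in> embeddings L" using assms G_emb by auto
  have t1: "\<tau> 1 = 1" "\<sigma> 1 = 1" using e emb_1[OF sf] by auto
  have "\<sigma> (\<tau> x) = 0" if "x \<notin> L" for x
    using G_out[OF assms(2) that] G_0[OF assms(1)] by simp
  then have "\<sigma> \<circ> \<tau> \<in> embeddings L"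
    unfolding embeddings_def
    using e assms G_L emb_add[OF sf] emb_mult[OF sf] t1 by auto
  moreover have "(\<sigma> \<circ> \<tau>) ` L = L"
  proof -
    have "(\<sigma> \<circ> \<tau>) ` L = \<sigma> ` (\<tau> ` L)" by (rule image_comp[symmetric])
    then show ?thesis using assms by (simp add: automorphisms_def)
  qed
  ultimately show ?thesis by (simp add: automorphisms_def)
qed

lemma idL_G: "idL \<in> G"
  unfolding automorphisms_def embeddings_def idL_def using sf by auto

lemma hom: "\<sigma> \<in> G \<Longrightarrow> \<tau> \<in> G \<Longrightarrow> \<phi> (\<sigma> \<circ> \<tau>) = (\<lambda>i\<in>{..<t}. (\<phi> \<sigma> i + \<phi> \<tau> i) mod 2)"
  using iso unfolding iso_def hom_def galois_group_def by auto

lemma phi_mult: "\<sigma> \<in> G \<Longrightarrow> \<tau> \<in> G \<Longrightarrow> i < t \<Longrightarrow> \<phi> (\<sigma> \<circ> \<tau>) i = (\<phi> \<sigma> i + \<phi> \<tau> i) mod 2"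
  using hom by simp

lemma phi_car: "\<sigma> \<in> G \<Longrightarrow> \<phi> \<sigma> \<in> (\<Pi>\<^sub>E i\<in>{..<t}. {0..<2})"
  using iso unfolding iso_def hom_def galois_group_def by (auto simp: carrier_integer_mod_group)

lemma phi_01: "\<sigma> \<in> G \<Longrightarrow> i < t \<Longrightarrow> \<phi> \<sigma> i = 0 \<or> \<phi> \<sigma> i = 1"
proof -
  assume a: "\<sigma> \<in> G" "i < t"
  then have "0 \<le> \<phi> \<sigma> i \<and> \<phi> \<sigma> i < 2" using phi_car[of \<sigma>] by (auto simp: PiE_iff)
  then show ?thesis by linarith
qed

lemma phi_bij: "bij_betw \<phi> G (\<Pi>\<^sub>E i\<in>{..<t}. {0..<2})"
  using iso unfolding iso_def galois_group_def by (auto simp: carrier_integer_mod_group)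

lemma phi_inj: assumes "\<sigma> \<in> G" "\<tau> \<in> G" "\<forall>i<t. \<phi> \<sigma> i = \<phi> \<tau> i" shows "\<sigma> = \<tau>"
proof -
  have "\<phi> \<sigma> = \<phi> \<tau>"
  proof
    fix i show "\<phi> \<sigma> i = \<phi> \<tau> i"
    proof (cases "i < t")
      case True then show ?thesis using assms(3) by blast
    next
      case False
      then have "\<phi> \<sigma> i = undefined" "\<phi> \<tau> i = undefined"
        using phi_car[OF assms(1)] phi_car[OF assms(2)] by (auto simp: PiE_def extensional_def)
      then show ?thesis by simp
    qed
  qed
  then show ?thesis using phi_bij assms(1,2) by (auto simp: bij_betw_def inj_on_def)
qed

lemma phi_surj: assumes "x \<in> (\<Pi>\<^sub>E i\<in>{..<t}. {0..<2})" obtains \<sigma> where "\<sigma> \<in> G" "\<phi> \<sigma> = x"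
proof -
  have "x \<in> \<phi> ` G" using phi_bij assms by (simp add: bij_betw_def)
  then show ?thesis using that by blast
qed

lemma idL_comp: "g \<in> G \<Longrightarrow> idL \<circ> g = g"
proof -
  assume g: "g \<in> G"
  show ?thesis
  proof
    fix x show "(idL \<circ> g) x = g x"
      by (cases "x \<in> L") (auto simp: idL_def G_L[OF g] G_out[OF g])
  qed
qed

lemma phi_id: "i < t \<Longrightarrow> \<phi> idL i = 0"
proof -
  assume i: "i < t"
  have "\<phi> (idL \<circ> idL) i = (\<phi> idL i + \<phi> idL i) mod 2" by (rule phi_mult[OF idL_G idL_G i])
  then have "\<phi> idL i = (2 * \<phi> idL i) mod 2" using idL_comp[OF idL_G] by simp
  then show ?thesis by simp
qed

lemma invol: assumes "\<sigma> \<in> G" shows "\<sigma> \<circ> \<sigma> = idL"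
proof (rule phi_inj[OF comp_G[OF assms assms] idL_G], intro allI impI)
  fix i assume i: "i < t"
  show "\<phi> (\<sigma> \<circ> \<sigma>) i = \<phi> idL i"
    using phi_mult[OF assms assms i] phi_id[OF i] phi_01[OF assms i] by auto
qed

lemma invol_pt: "\<sigma> \<in> G \<Longrightarrow> x \<in> L \<Longrightarrow> \<sigma> (\<sigma> x) = x"
  using invol[of \<sigma>] by (auto simp: fun_eq_iff idL_def dest: spec[of _ x])

lemma idL_phi: "\<sigma> \<in> G \<Longrightarrow> (\<forall>i<t. \<phi> \<sigma> i = 0) \<Longrightarrow> \<sigma> = idL"
  using phi_inj[OF _ idL_G] phi_id by auto

definition psi :: "nat \<Rightarrow> real \<Rightarrow> real" where
  "psi i = (SOME \<sigma>. \<sigma> \<in> G \<and> \<phi> \<sigma> = (\<lambda>j\<in>{..<t}. if j = i then 1 else 0))"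

lemma psi: "psi i \<in> G \<and> \<phi> (psi i) = (\<lambda>j\<in>{..<t}. if j = i then 1 else 0)"
proof -
  have "(\<lambda>j\<in>{..<t}. if j = i then 1 else 0) \<in> (\<Pi>\<^sub>E i\<in>{..<t}. {0..<2::int})" by auto
  then obtain \<sigma> where "\<sigma> \<in> G" "\<phi> \<sigma> = (\<lambda>j\<in>{..<t}. if j = i then 1 else 0)" by (rule phi_surj)
  then show ?thesis unfolding psi_def by (rule someI[where P = "\<lambda>\<sigma>. \<sigma> \<in> G \<and> \<phi> \<sigma> = _", OF conjI])
qed

lemma psi_G: "psi i \<in> G" and phi_psi: "j < t \<Longrightarrow> \<phi> (psi i) j = (if j = i then 1 else 0)"
  using psi by auto

definition chi :: "nat \<Rightarrow> (real \<Rightarrow> real) \<Rightarrow> bit" where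
  "chi i \<sigma> = (if \<sigma> \<in> G \<and> \<phi> \<sigma> i = 1 then 1 else 0)"

definition oneE :: "(real \<Rightarrow> real) \<Rightarrow> bit" where
  "oneE \<sigma> = (if \<sigma> \<in> G then 1 else 0)"

lemma hom_span_aux:
  assumes off: "\<forall>\<sigma>. \<sigma> \<notin> G \<longrightarrow> f \<sigma> = 0"
    and fh: "\<forall>\<sigma>\<in>G. \<forall>\<tau>\<in>G. f (\<sigma> \<circ> \<tau>) = f \<sigma> + f \<tau>"
  shows "finite S \<Longrightarrow> S \<subseteq> {..<t} \<Longrightarrow> \<forall>\<sigma>\<in>G. (\<forall>i<t. i \<notin> S \<longrightarrow> \<phi> \<sigma> i = 0) \<longrightarrow>
     f \<sigma> = (\<Sum>i\<in>S. f (psi i) * chi i \<sigma>)"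
proof (induction S rule: finite_induct)
  case empty
  show ?case
  proof (intro ballI impI)
    fix \<sigma> assume "\<sigma> \<in> G" "\<forall>i<t. i \<notin> {} \<longrightarrow> \<phi> \<sigma> i = 0"
    then have "\<sigma> = idL" using idL_phi by auto
    moreover have "f idL = 0"
      using fh idL_G idL_comp[OF idL_G] by (metis add_cancel_right_right bit_add_self)
    ultimately show "f \<sigma> = (\<Sum>i\<in>{}. f (psi i) * chi i \<sigma>)" by simp
  qed
next
  case (insert j S)
  have j: "j < t" using insert by auto
  show ?case
  proof (intro ballI impI)
    fix \<sigma> assume s: "\<sigma> \<in> G" and supp: "\<forall>i<t. i \<notin> insert j S \<longrightarrow> \<phi> \<sigma> i = 0"
    show "f \<sigma> = (\<Sum>i\<in>insert j S. f (psi i) * chi i \<sigma>)"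
    proof (cases "\<phi> \<sigma> j = 1")
      case False
      then have "\<phi> \<sigma> j = 0" using phi_01[OF s j] by auto
      then have "f \<sigma> = (\<Sum>i\<in>S. f (psi i) * chi i \<sigma>)"
        using insert.IH insert.prems s supp by auto
      moreover have "(\<Sum>i\<in>insert j S. f (psi i) * chi i \<sigma>) = f (psi j) * chi j \<sigma> + (\<Sum>i\<in>S. f (psi i) * chi i \<sigma>)"
        by (rule sum.insert[OF insert.hyps])
      moreover have "chi j \<sigma> = 0" using False by (simp add: chi_def)
      ultimately show ?thesis by simp
    next
      case True
      define \<sigma>' where "\<sigma>' = \<sigma> \<circ> psi j"
      have s': "\<sigma>' \<in> G" unfolding \<sigma>'_def by (rule comp_G[OF s psi_G])
      have ph: "\<phi> \<sigma>' i = (if i = j then 0 else \<phi> \<sigma> i)" if "i < t" for i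
        using phi_mult[OF s psi_G that, of j] phi_psi[OF that, of j] True phi_01[OF s that]
        unfolding \<sigma>'_def by auto
      have "f \<sigma>' = (\<Sum>i\<in>S. f (psi i) * chi i \<sigma>')"
        using insert.IH insert.prems s' supp ph by auto
      also have "\<dots> = (\<Sum>i\<in>S. f (psi i) * chi i \<sigma>)"
      proof (intro sum.cong refl)
        fix i assume iS: "i \<in> S"
        then have "i < t" "i \<noteq> j" using insert.hyps insert.prems by auto
        then have "\<phi> \<sigma>' i = \<phi> \<sigma> i" using ph by simp
        then show "f (psi i) * chi i \<sigma>' = f (psi i) * chi i \<sigma>" using s s' by (simp add: chi_def)
      qed
      finally have "f \<sigma> + f (psi j) = (\<Sum>i\<in>S. f (psi i) * chi i \<sigma>)"
        using fh s psi_G unfolding \<sigma>'_def by simp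
      then have "f \<sigma> = f (psi j) + (\<Sum>i\<in>S. f (psi i) * chi i \<sigma>)"
        by (metis add.assoc add.commute add_0 bit_add_self)
      moreover have "(\<Sum>i\<in>insert j S. f (psi i) * chi i \<sigma>) = f (psi j) * chi j \<sigma> + (\<Sum>i\<in>S. f (psi i) * chi i \<sigma>)"
        by (rule sum.insert[OF insert.hyps])
      moreover have "chi j \<sigma> = 1" using True s by (simp add: chi_def)
      ultimately show ?thesis by simp
    qed
  qed
qed

lemma hom_span:
  assumes off: "\<forall>\<sigma>. \<sigma> \<notin> G \<longrightarrow> f \<sigma> = 0"
    and fh: "\<forall>\<sigma>\<in>G. \<forall>\<tau>\<in>G. f (\<sigma> \<circ> \<tau>) = f \<sigma> + f \<tau>"
  shows "f \<in> BV.span (chi ` {..<t})"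
proof -
  have eq: "f = (\<Sum>i<t. (\<lambda>\<sigma>. f (psi i) * chi i \<sigma>))"
  proof
    fix \<sigma>
    show "f \<sigma> = (\<Sum>i<t. (\<lambda>\<sigma>. f (psi i) * chi i \<sigma>)) \<sigma>"
    proof (cases "\<sigma> \<in> G")
      case True
      then show ?thesis using hom_span_aux[OF off fh, of "{..<t}"] by (simp add: sum_fun_apply)
    next
      case False
      then show ?thesis using off by (simp add: sum_fun_apply chi_def)
    qed
  qed
  have "(\<Sum>i<t. (\<lambda>\<sigma>. f (psi i) * chi i \<sigma>)) \<in> BV.span (chi ` {..<t})"
    by (intro BV.span_sum BV.span_scale BV.span_base) auto
  then show ?thesis using eq by simp
qed

end


context mq begin

lemma restr_emb:
  assumes K: "is_subfield K" "K \<subseteq> L" and s: "\<sigma> \<in> G"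
  shows "(\<lambda>x. if x \<in> K then \<sigma> x else 0) \<in> embeddings K"
proof -
  define f where "f = (\<lambda>x. if x \<in> K then \<sigma> x else (0::real))"
  have e: "\<sigma> \<in> embeddings L" by (rule G_emb[OF s])
  have 1: "f 1 = 1" using sf_1[OF K(1)] emb_1[OF sf e] by (simp add: f_def)
  have 2: "f (x + y) = f x + f y \<and> f (x * y) = f x * f y" if xy: "x \<in> K" "y \<in> K" for x y
  proof -
    have "x \<in> L" "y \<in> L" "x + y \<in> K" "x * y \<in> K" using xy K sf_add[OF K(1)] sf_mult[OF K(1)] by auto
    then show ?thesis using xy emb_add[OF sf e] emb_mult[OF sf e] by (simp add: f_def)
  qed
  have "f \<in> embeddings K" unfolding embeddings_def using 1 2 by (simp add: f_def)
  then show ?thesis by (simp add: f_def)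
qed

lemma two_values:
  assumes K: "K \<in> quadratic_subfields L" and e: "\<epsilon> \<in> K"
  obtains \<rho> where "\<forall>\<sigma>\<in>G. \<sigma> \<epsilon> = \<epsilon> \<or> \<sigma> \<epsilon> = \<rho>"
proof (cases "\<forall>\<sigma>\<in>G. \<sigma> \<epsilon> = \<epsilon>")
  case True then show ?thesis using that by blast
next
  case False
  then obtain \<sigma>0 where s0: "\<sigma>0 \<in> G" "\<sigma>0 \<epsilon> \<noteq> \<epsilon>" by blast
  have sfK: "is_subfield K" and KL: "K \<subseteq> L" and dK: "rat_degree K 2"
    using K by (auto simp: quadratic_subfields_def)
  define r where "r \<sigma> = (\<lambda>x. if x \<in> K then \<sigma> x else (0::real))" for \<sigma> :: "real \<Rightarrow> real"
  have rE: "r \<sigma> \<in> embeddings K" if "\<sigma> \<in> G" for \<sigma>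
    unfolding r_def by (rule restr_emb[OF sfK KL that])
  have fc: "finite (embeddings K)" "card (embeddings K) \<le> 2" using emb_card[OF sfK dK] by auto
  have eL: "\<epsilon> \<in> L" using e KL by auto
  have "\<sigma> \<epsilon> = \<epsilon> \<or> \<sigma> \<epsilon> = \<sigma>0 \<epsilon>" if s: "\<sigma> \<in> G" for \<sigma>
  proof (rule ccontr)
    assume "\<not> (\<sigma> \<epsilon> = \<epsilon> \<or> \<sigma> \<epsilon> = \<sigma>0 \<epsilon>)"
    then have n: "\<sigma> \<epsilon> \<noteq> \<epsilon>" "\<sigma> \<epsilon> \<noteq> \<sigma>0 \<epsilon>" by auto
    have ri: "r idL \<epsilon> = \<epsilon>" using e eL by (simp add: r_def idL_def)
    have r0: "r \<sigma>0 \<epsilon> = \<sigma>0 \<epsilon>" "r \<sigma> \<epsilon> = \<sigma> \<epsilon>" using e by (auto simp: r_def)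
    have "r \<sigma> \<epsilon> \<noteq> r idL \<epsilon>" "r \<sigma> \<epsilon> \<noteq> r \<sigma>0 \<epsilon>" "r idL \<epsilon> \<noteq> r \<sigma>0 \<epsilon>"
      using n s0(2) ri r0 by simp_all
    then have d: "r \<sigma> \<noteq> r idL" "r \<sigma> \<noteq> r \<sigma>0" "r idL \<noteq> r \<sigma>0" by auto
    have "card {r \<sigma>, r idL, r \<sigma>0} = 3" using d by simp
    moreover have "{r \<sigma>, r idL, r \<sigma>0} \<subseteq> embeddings K" using rE s s0 idL_G by auto
    ultimately have "3 \<le> card (embeddings K)" using card_mono[OF fc(1)] by metis
    then show False using fc by simp
  qed
  then show ?thesis using that by blast
qed

lemma sig_neg1: "signature L (-1) = oneE"
proof
  fix \<sigma>
  show "signature L (-1) \<sigma> = oneE \<sigma>"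
  proof (cases "\<sigma> \<in> G")
    case True
    then have "\<sigma> (-1) = -1" using emb_neg[OF sf G_emb[OF True] sf_1[OF sf]] emb_1[OF sf G_emb[OF True]] by simp
    then show ?thesis using True E_eq by (simp add: signature_def oneE_def)
  next
    case False
    then show ?thesis using E_eq by (simp add: signature_def oneE_def)
  qed
qed

lemma sig_span:
  assumes K: "K \<in> quadratic_subfields L" and e: "\<epsilon> \<in> K"
  shows "signature L \<epsilon> \<in> BV.span (insert oneE (chi ` {..<t}))"
proof -
  obtain \<rho> where rho: "\<forall>\<sigma>\<in>G. \<sigma> \<epsilon> = \<epsilon> \<or> \<sigma> \<epsilon> = \<rho>" using two_values[OF K e] by blast
  have eL: "\<epsilon> \<in> L" using e K by (auto simp: quadratic_subfields_def)
  define h where "h \<sigma> = (if \<sigma> \<in> G \<and> \<sigma> \<epsilon> \<noteq> \<epsilon> then 1 else (0::bit))" for \<sigma>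
  have hh: "h (\<sigma> \<circ> \<tau>) = h \<sigma> + h \<tau>" if s: "\<sigma> \<in> G" and t: "\<tau> \<in> G" for \<sigma> \<tau>
  proof -
    have st: "\<sigma> \<circ> \<tau> \<in> G" by (rule comp_G[OF s t])
    have tL: "\<tau> \<epsilon> \<in> L" using G_L[OF t eL] .
    show ?thesis
    proof (cases "\<tau> \<epsilon> = \<epsilon>")
      case True
      then show ?thesis using s t st by (simp add: h_def)
    next
      case False
      then have te: "\<tau> \<epsilon> = \<rho>" using rho t by blast
      show ?thesis
      proof (cases "\<sigma> \<epsilon> = \<epsilon>")
        case True
        have "\<sigma> (\<tau> \<epsilon>) \<noteq> \<epsilon>"
        proof
          assume "\<sigma> (\<tau> \<epsilon>) = \<epsilon>"
          then have "\<sigma> (\<sigma> (\<tau> \<epsilon>)) = \<sigma> \<epsilon>" by simp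
          then show False using invol_pt[OF s tL] True False by simp
        qed
        then show ?thesis using s t st True False by (simp add: h_def)
      next
        case False2: False
        then have "\<sigma> \<epsilon> = \<rho>" using rho s by blast
        then have "\<sigma> (\<tau> \<epsilon>) = \<epsilon>" using te invol_pt[OF s eL] by simp
        then show ?thesis using s t st False False2 by (simp add: h_def)
      qed
    qed
  qed
  have hspan: "h \<in> BV.span (chi ` {..<t})"
    by (rule hom_span) (use hh in \<open>auto simp: h_def\<close>)
  define c where "c = (if \<epsilon> < 0 then 1 else (0::bit))"
  define d where "d = (if \<rho> < 0 then 1 else (0::bit)) + c"
  have eq: "signature L \<epsilon> = (\<lambda>\<sigma>. c * oneE \<sigma>) + (\<lambda>\<sigma>. d * h \<sigma>)"
  proof
    fix \<sigma>
    show "signature L \<epsilon> \<sigma> = ((\<lambda>\<sigma>. c * oneE \<sigma>) + (\<lambda>\<sigma>. d * h \<sigma>)) \<sigma>"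
    proof (cases "\<sigma> \<in> G")
      case True
      then show ?thesis
      proof (cases "\<sigma> \<epsilon> = \<epsilon>")
        case True2: True
        then show ?thesis using True E_eq by (simp add: signature_def oneE_def h_def c_def)
      next
        case False
        then have "\<sigma> \<epsilon> = \<rho>" using rho True by blast
        then show ?thesis using True False E_eq
          by (simp add: signature_def oneE_def h_def c_def d_def add.assoc)
      qed
    next
      case False
      then show ?thesis using E_eq by (simp add: signature_def oneE_def h_def)
    qed
  qed
  have "(\<lambda>\<sigma>. c * oneE \<sigma>) + (\<lambda>\<sigma>. d * h \<sigma>) \<in> BV.span (insert oneE (chi ` {..<t}))"
  proof (rule BV.span_add)
    show "(\<lambda>\<sigma>. c * oneE \<sigma>) \<in> BV.span (insert oneE (chi ` {..<t}))"
      by (intro BV.span_scale BV.span_base) simp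
    show "(\<lambda>\<sigma>. d * h \<sigma>) \<in> BV.span (insert oneE (chi ` {..<t}))"
      by (rule BV.span_scale) (use hspan BV.span_mono[of "chi ` {..<t}" "insert oneE (chi ` {..<t})"] in auto)
  qed
  then show ?thesis using eq by simp
qed

end


context mq begin

lemma comp_assoc_inv: "h \<in> G \<Longrightarrow> a \<in> G \<Longrightarrow> h \<circ> (h \<circ> a) = a"
  by (metis comp_assoc invol idL_comp)

lemma quad_exists:
  assumes i: "i < t"
  shows "\<exists>y\<in>L. y \<noteq> 0 \<and> y \<notin> \<rat> \<and> y * y \<in> \<rat> \<and> (\<forall>\<sigma>\<in>G. \<sigma> y = (if \<phi> \<sigma> i = 1 then - y else y))"
proof -
  define s where "s \<sigma> = (if \<phi> \<sigma> i = 1 then -1 else (1::real))" for \<sigma>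
  have s_mult: "s (\<sigma> \<circ> \<tau>) = s \<sigma> * s \<tau>" if "\<sigma> \<in> G" "\<tau> \<in> G" for \<sigma> \<tau>
    using phi_mult[OF that i] phi_01[OF that(1) i] phi_01[OF that(2) i] by (auto simp: s_def)
  have s_sq: "s \<sigma> * s \<sigma> = 1" for \<sigma> by (simp add: s_def)
  define yv where "yv x = (\<Sum>g\<in>G. s g * g x)" for x
  have sL: "s g * w \<in> L" if "w \<in> L" for g w
    using that sf_neg[OF sf] by (simp add: s_def)
  have yL: "yv x \<in> L" if "x \<in> L" for x
    unfolding yv_def by (rule sf_sum[OF sf], rule sL, rule G_L) (use that in auto)
  have hs: "h (s g * w) = s g * h w" if "h \<in> G" "w \<in> L" for h g w
    using emb_neg[OF sf G_emb[OF that(1)] that(2)] by (simp add: s_def)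
  have y_eq: "h (yv x) = s h * yv x" if h: "h \<in> G" and x: "x \<in> L" for h x
  proof -
    have "h (yv x) = (\<Sum>g\<in>G. h (s g * g x))"
      unfolding yv_def by (rule emb_sum[OF sf G_emb[OF h]]) (use sL G_L x in auto)
    also have "\<dots> = (\<Sum>g\<in>G. s g * (h \<circ> g) x)"
      using hs[OF h] G_L x by (intro sum.cong) auto
    also have "\<dots> = (\<Sum>g\<in>G. s (h \<circ> g) * g x)"
    proof (rule sum.reindex_bij_witness[where i = "\<lambda>g. h \<circ> g" and j = "\<lambda>g. h \<circ> g"])
      fix a assume a: "a \<in> G"
      show "h \<circ> (h \<circ> a) = a" by (rule comp_assoc_inv[OF h a])
      show "h \<circ> a \<in> G" by (rule comp_G[OF h a])
      show "s (h \<circ> (h \<circ> a)) * (h \<circ> a) x = s a * (h \<circ> a) x" using comp_assoc_inv[OF h a] by simp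
    next
      fix b assume b: "b \<in> G"
      show "h \<circ> (h \<circ> b) = b" by (rule comp_assoc_inv[OF h b])
      show "h \<circ> b \<in> G" by (rule comp_G[OF h b])
    qed
    also have "\<dots> = (\<Sum>g\<in>G. s h * (s g * g x))"
      using s_mult[OF h] by (intro sum.cong) auto
    also have "\<dots> = s h * yv x" unfolding yv_def by (simp add: sum_distrib_left)
    finally show ?thesis .
  qed
  obtain x where x: "x \<in> L" "yv x \<noteq> 0"
  proof (rule ccontr)
    assume "\<not> thesis"
    then have "\<forall>x\<in>L. (\<Sum>g\<in>G. s g * g x) = 0" using that unfolding yv_def by blast
    moreover have "\<forall>g\<in>G. s g \<noteq> 0" by (simp add: s_def)
    ultimately have "G = {}" using dedekind_aux[OF sf finG aut_sub_emb] by blast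
    then show False using idL_G by simp
  qed
  define y where "y = yv x"
  have y: "y \<in> L" "y \<noteq> 0" using x yL y_def by auto
  have yh: "\<sigma> y = (if \<phi> \<sigma> i = 1 then - y else y)" if "\<sigma> \<in> G" for \<sigma>
    using y_eq[OF that x(1)] by (simp add: y_def s_def)
  have yy: "y * y \<in> \<rat>"
  proof (rule fixed_rat[OF sf deg cardG])
    show "y * y \<in> L" using y sf_mult[OF sf] by auto
    show "\<forall>g\<in>G. g (y * y) = y * y"
    proof
      fix g assume g: "g \<in> G"
      show "g (y * y) = y * y" using emb_mult[OF sf G_emb[OF g] y(1) y(1)] yh[OF g] by simp
    qed
  qed
  have ynq: "y \<notin> \<rat>"
  proof
    assume "y \<in> \<rat>"
    then obtain q where q: "y = of_rat q" by (auto elim: Rats_cases)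
    have "psi i y = y" using q emb_of_rat[OF sf G_emb[OF psi_G]] by simp
    moreover have "psi i y = - y" using yh[OF psi_G] phi_psi[OF i] by simp
    ultimately show False using y(2) by simp
  qed
  show ?thesis using y yy ynq yh by blast
qed

end


definition Kq :: "real \<Rightarrow> real set" where
  "Kq y = {z. \<exists>a b. z = of_rat a + of_rat b * y}"

lemma Kq_nz:
  assumes ynq: "y \<notin> \<rat>" and q: "y * y = of_rat q" and nz: "of_rat a + of_rat b * y \<noteq> 0"
  shows "a * a - b * b * q \<noteq> 0"
proof
  assume D: "a * a - b * b * q = 0"
  show False
  proof (cases "b = 0")
    case True
    then have "a = 0" using D by simp
    then show False using nz True by simp
  next
    case False
    have "q = (a / b) * (a / b)" using D False by (simp add: field_simps)
    then have "y * y = of_rat ((a / b) * (a / b))" using q by simp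
    then have "y * y = of_rat (a / b) * of_rat (a / b)" by (simp only: of_rat_mult)
    then have "(y - of_rat (a / b)) * (y + of_rat (a / b)) = 0" by (simp add: algebra_simps)
    then have "y = of_rat (a / b) \<or> y = - of_rat (a / b)" by (auto simp: eq_neg_iff_add_eq_0)
    then have "y \<in> \<rat>" by (metis Rats_minus_iff Rats_of_rat)
    then show False using ynq by simp
  qed
qed

lemma Kq_subfield:
  assumes ynq: "y \<notin> \<rat>" and q: "y * y = of_rat q"
  shows "is_subfield (Kq y)"
  unfolding is_subfield_def
proof (intro conjI ballI impI)
  show "0 \<in> Kq y" unfolding Kq_def by (rule CollectI, rule exI[of _ 0], rule exI[of _ 0]) simp
  show "1 \<in> Kq y" unfolding Kq_def by (rule CollectI, rule exI[of _ 1], rule exI[of _ 0]) simp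
  fix x z assume x: "x \<in> Kq y" and z: "z \<in> Kq y"
  obtain a b where ab: "x = of_rat a + of_rat b * y" using x unfolding Kq_def by blast
  obtain c d where cd: "z = of_rat c + of_rat d * y" using z unfolding Kq_def by blast
  have "x + z = of_rat (a + c) + of_rat (b + d) * y" using ab cd by (simp add: of_rat_add algebra_simps)
  then show "x + z \<in> Kq y" unfolding Kq_def by blast
  have "x * z = of_rat (a * c + b * d * q) + of_rat (a * d + b * c) * y"
    using ab cd q by (simp add: of_rat_add of_rat_mult algebra_simps)
  then show "x * z \<in> Kq y" unfolding Kq_def by blast
next
  fix x assume x: "x \<in> Kq y"
  obtain a b where ab: "x = of_rat a + of_rat b * y" using x unfolding Kq_def by blast
  have "- x = of_rat (- a) + of_rat (- b) * y" using ab by (simp add: of_rat_minus)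
  then show "- x \<in> Kq y" unfolding Kq_def by blast
  assume nz: "x \<noteq> 0"
  define D where "D = a * a - b * b * q"
  have D: "D \<noteq> 0" unfolding D_def by (rule Kq_nz[OF ynq q]) (use nz ab in simp)
  have D': "(of_rat D :: real) \<noteq> 0" using D by simp
  have "x * (of_rat (a / D) + of_rat (- b / D) * y) = 1"
  proof -
    have "x * (of_rat (a / D) + of_rat (- b / D) * y) = (of_rat a * of_rat a - of_rat b * of_rat b * (y * y)) / of_rat D"
      using D' by (simp add: ab of_rat_divide of_rat_minus field_simps)
    also have "\<dots> = of_rat D / of_rat D" using q by (simp add: D_def of_rat_diff of_rat_mult)
    finally show ?thesis using D' by simp
  qed
  then have "inverse x = of_rat (a / D) + of_rat (- b / D) * y" by (rule inverse_unique)
  then show "inverse x \<in> Kq y" unfolding Kq_def by blast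
qed

lemma sum2: "(\<Sum>i<(2::nat). f i) = f 0 + f 1"
  by (simp add: numeral_2_eq_2)

lemma Kq_degree:
  assumes ynq: "y \<notin> \<rat>"
  shows "rat_degree (Kq y) 2"
  unfolding rat_degree_def
proof (intro exI[of _ "\<lambda>i. if i = 0 then 1 else y"] conjI allI impI ballI)
  fix i :: nat assume "i < 2"
  show "(if i = 0 then 1 else y) \<in> Kq y" unfolding Kq_def
    by (cases "i = 0") (auto intro: exI[of _ 0] exI[of _ 1] simp: exI[of _ 1])
next
  fix c :: "nat \<Rightarrow> rat" and i :: nat
  assume eq: "(\<Sum>i<2. of_rat (c i) * (if i = 0 then 1 else y)) = 0" and i: "i < 2"
  have e: "of_rat (c 0) + of_rat (c 1) * y = 0" using eq by (simp add: sum2)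
  have c1: "c 1 = 0"
  proof (rule ccontr)
    assume "c 1 \<noteq> 0"
    then have "y = of_rat (- c 0 / c 1)" using e by (simp add: of_rat_divide of_rat_minus field_simps)
    then show False using ynq by (metis Rats_of_rat)
  qed
  then have "c 0 = 0" using e by simp
  then show "c i = 0" using c1 i by (cases i) auto
next
  fix x assume "x \<in> Kq y"
  then obtain a b where ab: "x = of_rat a + of_rat b * y" unfolding Kq_def by blast
  show "\<exists>c :: nat \<Rightarrow> rat. x = (\<Sum>i<2. of_rat (c i) * (if i = 0 then 1 else y))"
    by (rule exI[of _ "\<lambda>i. if i = 0 then a else b"]) (simp add: sum2 ab)
qed


context mq begin
lemma chi_psi: "i < t \<Longrightarrow> j < t \<Longrightarrow> chi j (psi i) = (if j = i then 1 else 0)"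
  using psi_G phi_psi by (simp add: chi_def)

lemma chi_id: "j < t \<Longrightarrow> chi j idL = 0"
  using phi_id by (simp add: chi_def)

lemma oneE_id: "oneE idL = 1"
  using idL_G by (simp add: oneE_def)
lemma chi_inj: "inj_on chi {..<t}"
proof (rule inj_onI)
  fix i j assume i: "i \<in> {..<t}" and j: "j \<in> {..<t}" and eq: "chi i = chi j"
  have it: "i < t" using i by simp
  have jt: "j < t" using j by simp
  have c1: "chi i (psi i) = 1" using chi_psi[OF it it] by simp
  show "i = j"
  proof (rule ccontr)
    assume ne: "i \<noteq> j"
    have "chi j (psi i) = 0" using chi_psi[OF it jt] ne by simp
    then show False using c1 eq by simp
  qed
qed
lemma indep_chi: "BV.independent (chi ` {..<t})"
  unfolding BV.independent_explicit_finite_subsets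
proof (intro allI impI ballI)
  fix T u v
  assume T: "T \<subseteq> chi ` {..<t}" "finite T" and eq: "(\<Sum>v\<in>T. (\<lambda>x. u v * v x)) = 0" and v: "v \<in> T"
  obtain j where j: "j < t" "v = chi j" using T v by auto
  have "(\<Sum>w\<in>T. u w * w (psi j)) = (\<Sum>w\<in>T. (\<lambda>x. u w * w x)) (psi j)" by (simp add: sum_fun_apply)
  also have "\<dots> = 0" using eq by simp
  finally have z: "(\<Sum>w\<in>T. u w * w (psi j)) = 0" .
  have "(\<Sum>w\<in>T - {v}. u w * w (psi j)) = 0"
  proof (rule sum.neutral, rule ballI)
    fix w assume w: "w \<in> T - {v}"
    then obtain k where k: "k < t" "w = chi k" using T by auto
    then have "k \<noteq> j" using w j by auto
    then show "u w * w (psi j) = 0" using k j chi_psi by simp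
  qed
  moreover have "(\<Sum>w\<in>T. u w * w (psi j)) = u v * v (psi j) + (\<Sum>w\<in>T - {v}. u w * w (psi j))"
    by (rule sum.remove[OF T(2) v])
  ultimately have A: "(\<Sum>w\<in>T. u w * w (psi j)) = u v * v (psi j)" by (simp only: add_0_right)
  have v1: "v (psi j) = 1" using j(2) chi_psi[OF j(1) j(1)] by simp
  from z have "u v * v (psi j) = 0" unfolding A .
  then show "u v = 0" unfolding v1 by simp
qed

lemma oneE_notin: "oneE \<notin> BV.span (chi ` {..<t})"
proof
  assume mem: "oneE \<in> BV.span (chi ` {..<t})"
  have sub: "BV.subspace (Collect (\<lambda>f. f idL = 0))" unfolding BV.subspace_def by simp
  have "(\<lambda>f. f idL = 0) oneE"
  proof (rule BV.span_induct[OF mem sub])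
    fix x assume "x \<in> chi ` {..<t}"
    then obtain j where j: "j < t" "x = chi j" by blast
    show "(\<lambda>f. f idL = 0) x" using chi_id[OF j(1)] j(2) by simp
  qed
  then have "oneE idL = 0" by simp
  then show False using oneE_id by simp
qed

lemma indep_B: "BV.independent (insert oneE (chi ` {..<t}))"
  by (rule BV.independent_insertI[OF oneE_notin indep_chi])

lemma card_B: "card (insert oneE (chi ` {..<t})) = t + 1"
proof -
  have "oneE \<notin> chi ` {..<t}"
  proof
    assume "oneE \<in> chi ` {..<t}"
    then obtain j where j: "j < t" "oneE = chi j" by blast
    then have "oneE idL = 0" using chi_id[OF j(1)] by simp
    then show False using oneE_id by simp
  qed
  then show ?thesis using card_image[OF chi_inj] by simp
qed

end


context mq begin

lemma Kq_sub_L: "y \<in> L \<Longrightarrow> Kq y \<subseteq> L"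
  unfolding Kq_def using sf_add[OF sf] sf_mult[OF sf] sf_of_rat[OF sf] by auto

lemma emb_on_Kq: assumes s: "\<sigma> \<in> G" and y: "y \<in> L"
  shows "\<sigma> (of_rat a + of_rat b * y) = of_rat a + of_rat b * \<sigma> y"
proof -
  have byL: "of_rat b * y \<in> L" using sf_mult[OF sf sf_of_rat[OF sf] y] .
  have "\<sigma> (of_rat a + of_rat b * y) = \<sigma> (of_rat a) + \<sigma> (of_rat b * y)"
    by (rule emb_add[OF sf G_emb[OF s] sf_of_rat[OF sf] byL])
  also have "\<dots> = of_rat a + of_rat b * \<sigma> y"
    using emb_of_rat[OF sf G_emb[OF s]] emb_rat_mult[OF sf G_emb[OF s] y] by simp
  finally show ?thesis .
qed

lemma quad_sig:
  assumes i: "i < t" and y: "y \<in> L" "y \<noteq> 0" "y \<notin> \<rat>" and q: "y * y = of_rat q"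
    and yh: "\<forall>\<sigma>\<in>G. \<sigma> y = (if \<phi> \<sigma> i = 1 then - y else y)"
    and e: "\<epsilon> \<in> Kq y" and nrm: "field_norm (Kq y) \<epsilon> = -1"
  shows "chi i \<in> BV.span {oneE, signature L \<epsilon>}"
proof -
  define K where "K = Kq y"
  have sfK: "is_subfield K" unfolding K_def by (rule Kq_subfield[OF y(3) q])
  have KL: "K \<subseteq> L" unfolding K_def by (rule Kq_sub_L[OF y(1)])
  have dK: "rat_degree K 2" unfolding K_def by (rule Kq_degree[OF y(3)])
  define r where "r \<sigma> = (\<lambda>x. if x \<in> K then \<sigma> x else (0::real))" for \<sigma> :: "real \<Rightarrow> real"
  have rE: "r \<sigma> \<in> embeddings K" if "\<sigma> \<in> G" for \<sigma>
    unfolding r_def by (rule restr_emb[OF sfK KL that])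
  have yK: "y \<in> K" unfolding K_def Kq_def by (rule CollectI, rule exI[of _ 0], rule exI[of _ 1]) simp
  have "psi i y = (if \<phi> (psi i) i = 1 then - y else y)" using yh psi_G by blast
  then have psiy: "psi i y = - y" using phi_psi[OF i, of i] by simp
  have "r idL y \<noteq> r (psi i) y" using yK y psiy by (simp add: r_def idL_def)
  then have dist: "r idL \<noteq> r (psi i)" by auto
  have fc: "finite (embeddings K)" "card (embeddings K) \<le> 2" using emb_card[OF sfK dK] by auto
  have EK: "embeddings K = {r idL, r (psi i)}"
  proof (rule card_seteq[symmetric, OF fc(1)])
    show "{r idL, r (psi i)} \<subseteq> embeddings K" using rE idL_G psi_G by auto
    show "card (embeddings K) \<le> card {r idL, r (psi i)}" using dist fc(2) by simp
  qed
  obtain a b where ab: "\<epsilon> = of_rat a + of_rat b * y" using e unfolding Kq_def by blast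
  have eK: "\<epsilon> \<in> K" using e K_def by simp
  have eL: "\<epsilon> \<in> L" using eK KL by auto
  have se: "\<sigma> \<epsilon> = of_rat a + of_rat b * \<sigma> y" if "\<sigma> \<in> G" for \<sigma>
    using emb_on_Kq[OF that y(1)] ab by simp
  have "field_norm K \<epsilon> = r idL \<epsilon> * r (psi i) \<epsilon>"
    unfolding field_norm_def EK using dist by simp
  also have "\<dots> = \<epsilon> * (of_rat a - of_rat b * y)"
    using eK eL se[OF psi_G] psiy by (simp add: r_def idL_def)
  finally have N: "\<epsilon> * (of_rat a - of_rat b * y) = -1" using nrm K_def by simp
  then have enz: "\<epsilon> \<noteq> 0" by auto
  have inv: "of_rat a - of_rat b * y = - 1 / \<epsilon>" using N enz by (simp add: field_simps)
  define c where "c = (if \<epsilon> < 0 then 1 else (0::bit))"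
  have eq: "chi i = (\<lambda>\<sigma>. c * oneE \<sigma>) + (\<lambda>\<sigma>. 1 * signature L \<epsilon> \<sigma>)"
  proof
    fix \<sigma>
    show "chi i \<sigma> = ((\<lambda>\<sigma>. c * oneE \<sigma>) + (\<lambda>\<sigma>. 1 * signature L \<epsilon> \<sigma>)) \<sigma>"
    proof (cases "\<sigma> \<in> G")
      case True
      show ?thesis
      proof (cases "\<phi> \<sigma> i = 1")
        case True2: True
        then have "\<sigma> y = - y" using bspec[OF yh True] by simp
        then have "\<sigma> \<epsilon> = - 1 / \<epsilon>" using se[OF True] inv by simp
        moreover have "(- 1 / \<epsilon> < 0) \<longleftrightarrow> \<not> \<epsilon> < 0" using enz
          by (auto simp: divide_less_0_iff)
        ultimately show ?thesis using True True2 E_eq by (simp add: chi_def oneE_def signature_def c_def)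
      next
        case False
        then have "\<sigma> y = y" using bspec[OF yh True] by simp
        then have "\<sigma> \<epsilon> = \<epsilon>" using se[OF True] ab by simp
        then show ?thesis using True False E_eq by (simp add: chi_def oneE_def signature_def c_def)
      qed
    next
      case False
      then show ?thesis using E_eq by (simp add: chi_def oneE_def signature_def)
    qed
  qed
  have "(\<lambda>\<sigma>. c * oneE \<sigma>) + (\<lambda>\<sigma>. 1 * signature L \<epsilon> \<sigma>) \<in> BV.span {oneE, signature L \<epsilon>}"
    by (rule BV.span_add; rule BV.span_scale; rule BV.span_base; simp)
  then show ?thesis using eq by simp
qed

end


theorem proposition6p2:
  fixes L :: "real set" and t :: nat and \<epsilon> :: "real set \<Rightarrow> real"
  assumes "real_multiquadratic L t"
    and "\<forall>K\<in>quadratic_subfields L. fundamental_unit K (\<epsilon> K)"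
  shows "vector_space.dim (\<lambda>(c::bit) f \<sigma>. c * f \<sigma>)
           (insert (signature L (-1)) (signature L ` \<epsilon> ` quadratic_subfields L)) \<le> t + 1
    \<and> ((\<forall>K\<in>quadratic_subfields L. field_norm K (\<epsilon> K) = -1) \<longrightarrow>
         vector_space.dim (\<lambda>(c::bit) f \<sigma>. c * f \<sigma>)
           (insert (signature L (-1)) (signature L ` \<epsilon> ` quadratic_subfields L)) = t + 1)"
proof -
  have sf: "is_subfield L" using assms(1) by (simp add: real_multiquadratic_def)
  obtain n where deg: "rat_degree L n" and cardG: "card (automorphisms L) = n"
    using assms(1) by (auto simp: real_multiquadratic_def)
  obtain \<phi> where iso: "\<phi> \<in> iso (galois_group L) (product_group {..<t} (\<lambda>_. integer_mod_group 2))"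
    using assms(1) by (auto simp: real_multiquadratic_def is_iso_def)
  interpret M: mq L n t \<phi> by unfold_locales (rule sf, rule deg, rule cardG, rule iso)
  define S where "S = insert (signature L (-1)) (signature L ` \<epsilon> ` quadratic_subfields L)"
  define W where "W = insert M.oneE (M.chi ` {..<t})"
  have eK: "\<epsilon> K \<in> K" if "K \<in> quadratic_subfields L" for K
    using assms(2) that by (auto simp: fundamental_unit_def is_unit_OK_def)
  have finW: "finite W" unfolding W_def by simp
  have cardW: "card W = t + 1" unfolding W_def by (rule M.card_B)
  have SW: "S \<subseteq> BV.span W"
  proof
    fix x assume "x \<in> S"
    then consider "x = signature L (-1)" | K where "K \<in> quadratic_subfields L" "x = signature L (\<epsilon> K)"
      unfolding S_def by blast
    then show "x \<in> BV.span W"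
    proof cases
      case 1
      then show ?thesis using M.sig_neg1 BV.span_base W_def by simp
    next
      case 2
      then show ?thesis using M.sig_span[OF 2(1) eK[OF 2(1)]] W_def by simp
    qed
  qed
  have up: "BV.dim S \<le> t + 1" using BV.dim_le_card[OF SW finW] cardW by simp
  have low: "BV.dim S = t + 1" if nrm: "\<forall>K\<in>quadratic_subfields L. field_norm K (\<epsilon> K) = -1"
  proof -
    have WS: "W \<subseteq> BV.span S"
    proof
      fix w assume "w \<in> W"
      then consider "w = M.oneE" | i where "i < t" "w = M.chi i" unfolding W_def by blast
      then show "w \<in> BV.span S"
      proof cases
        case 1
        then show ?thesis using M.sig_neg1 BV.span_base S_def by simp
      next
        case 2
        obtain y where y: "y \<in> L" "y \<noteq> 0" "y \<notin> \<rat>" "y * y \<in> \<rat>"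
          and yh: "\<forall>\<sigma>\<in>automorphisms L. \<sigma> y = (if \<phi> \<sigma> i = 1 then - y else y)"
          using M.quad_exists[OF 2(1)] by blast
        obtain q where q: "y * y = of_rat q" using y(4) by (auto elim: Rats_cases)
        have KQ: "Kq y \<in> quadratic_subfields L"
          unfolding quadratic_subfields_def
          using Kq_subfield[OF y(3) q] M.Kq_sub_L[OF y(1)] Kq_degree[OF y(3)] by simp
        have "M.chi i \<in> BV.span {M.oneE, signature L (\<epsilon> (Kq y))}"
          by (rule M.quad_sig[OF 2(1) y(1-3) q yh eK[OF KQ]]) (use nrm KQ in simp)
        moreover have "{M.oneE, signature L (\<epsilon> (Kq y))} \<subseteq> S"
          using M.sig_neg1 KQ S_def by auto
        ultimately show ?thesis using 2(2) BV.span_mono by blast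
      qed
    qed
    obtain B where B: "B \<subseteq> S" "BV.independent B" "S \<subseteq> BV.span B" "card B = BV.dim S"
      by (rule BV.basis_exists)
    have finB: "finite B"
      using BV.independent_span_bound[OF finW B(2)] B(1) SW by blast
    have "BV.span S \<subseteq> BV.span B" by (rule BV.span_minimal[OF B(3) BV.subspace_span])
    then have "W \<subseteq> BV.span B" using WS by blast
    then have "card W \<le> card B"
      using BV.independent_span_bound[OF finB M.indep_B] W_def by blast
    then show ?thesis using up cardW B(4) by simp
  qed
  show ?thesis using up low S_def by simp
qed


end
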